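(* Let $q\ge 1$ and let $\rho_{\rm ref}$ be the function defined in the context below. Then: (1) $\rho_{\rm ref}(0)=1$ and $\rho_{\rm ref}(1)=1/2$; (2) $\rho_{\rm ref}'(1)<0$; (3) $\rho_{\rm ref}(\mu)\ge 1/2$ for all $\mu\in[-1,1]$.
   Context: Let $(w_k,t_k)$, $k=1,\dots,q$, be the weights and nodes of the $q$-point Gauss–Legendre quadrature rule on $[-1,1]$. Thus $w_k>0$ and $-1<t_k<1$. The rule is symmetric: whenever $(w_k,t_k)$ is a weight–node pair, so is $(w_k,-t_k)$. It satisfies $\sum_{k=1}^q w_k=2$ and is exact for polynomials of degree at most $2q-1$. For real $\mu$ define $$\rho_{\rm ref}(\mu)=\frac12\sum_{k=1}^q w_k\,\frac{1+\mu s_k}{1+2\mu s_k+\mu^2},\qquad s_k=\sin(\pi t_k/2).$$ Equivalently, $\rho_{\rm ref}$ is the result of applying this quadrature rule to the Cauchy integral $\frac{1}{2\pi\iota}\oint_{|z|=1}\frac{dz}{z-\mu}$ (the indicator of the unit disk), with the circle parametrized by $\phi(t)=e^{\iota\frac{\pi}{2}(1+t)}$ for $-1\le t\le 3$ and the integral folded onto $[-1,1]$. *)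

theory Defs
  imports "HOL-Analysis.Analysis" "HOL-Computational_Algebra.Polynomial"
begin

text \<open>This determines the rule uniquely (it is
  the classical Gauss-Legendre rule). The further standard properties quoted in the
  paper (positive weights, nodes in the open interval, symmetry) are recorded as well;
  they are consequences of the exactness characterization.\<close>

definition gauss_legendre_rule :: "nat \<Rightarrow> (nat \<Rightarrow> real) \<Rightarrow> (nat \<Rightarrow> real) \<Rightarrow> bool" where
  "gauss_legendre_rule q w t \<longleftrightarrow>
     inj_on t {..<q} \<and>
     (\<forall>p :: real poly. degree p \<le> 2 * q - 1 \<longrightarrow>
        (\<Sum>k<q. w k * poly p (t k)) = integral {-1..1} (poly p)) \<and>
     (\<forall>k<q. 0 < w k \<and> -1 < t k \<and> t k < 1) \<and>
     (\<forall>k<q. \<exists>j<q. w j = w k \<and> t j = - t k) \<and>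
     (\<Sum>k<q. w k) = 2"

definition rho_ref :: "nat \<Rightarrow> (nat \<Rightarrow> real) \<Rightarrow> (nat \<Rightarrow> real) \<Rightarrow> real \<Rightarrow> real" where
  "rho_ref q w t \<mu> = 1/2 * (\<Sum>k<q. w k * (1 + \<mu> * sin (pi * t k / 2)) /
        (1 + 2 * \<mu> * sin (pi * t k / 2) + \<mu>^2))"

end

theory Submission
  imports Defs
begin

lemma s_bounds:
  assumes "-1 < x" "x < 1"
  shows "-1 < sin (pi * x / 2) \<and> sin (pi * x / 2) < 1"
proof -
  have "pi * (-1) < pi * x" "pi * x < pi * 1"
    by (rule mult_strict_left_mono, use assms in auto)+
  then have "-(pi/2) < pi * x / 2" "pi * x / 2 < pi/2" by auto
  then have c: "cos (pi * x / 2) > 0" by (intro cos_gt_zero_pi) auto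
  have "sin (pi*x/2)^2 + cos (pi*x/2)^2 = 1" by (rule sin_cos_squared_add)
  moreover have "cos (pi*x/2)^2 > 0" using c by simp
  ultimately have "sin (pi*x/2)^2 < 1" by linarith
  then have "\<bar>sin (pi*x/2)\<bar> < 1" by (simp add: abs_square_less_1)
  then show ?thesis by linarith
qed
lemma T: fixes w s \<mu> :: real assumes den: "1 + 2 * \<mu> * s + \<mu>^2 > 0"
  shows "w * (1 + \<mu> * s) / (1 + 2 * \<mu> * s + \<mu>^2) - w / 2
          = w * (1 - \<mu>^2) / (2 * (1 + 2 * \<mu> * s + \<mu>^2))"
  using den by (simp add: field_simps)

lemma X: assumes p: "1 + (s::real) > 0" shows "((\<lambda>\<mu>. w  *  (1 + \<mu>  *  s) / (1 + 2  *  \<mu>  *  s + \<mu> ^ 2))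
      has_real_derivative (-(w)/(2 * (1+s)))) (at 1)"
proof -
  have d: "((\<lambda>\<mu>. w  *  (1 + \<mu>  *  s) / (1 + 2  *  \<mu>  *  s + \<mu> ^ 2)) has_real_derivative
     ((w * s) * (1+2 * 1 * s+1 ^ 2) - (w * (1+1 * s)) * (2 * s+2 * 1)) / (1+2 * 1 * s+1 ^ 2) ^ 2) (at 1)"
    using p by (auto intro!: derivative_eq_intros simp: power2_eq_square algebra_simps)
  have e1: "(1+2 * 1 * s+1 ^ 2) = 2 * (1+s)" by simp
  have e2: "((w * s) * (1+2 * 1 * s+1 ^ 2) - (w * (1+1 * s)) * (2 * s+2 * 1)) = -w * (2 * (1+s))" by (simp add: algebra_simps power2_eq_square)
  have b: "2 * (1+s) \<noteq> 0" using p by simp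
  have e3: "(-w * (2 * (1+s))) / (2 * (1+s)) ^ 2 = -(w)/(2 * (1+s))"
    unfolding power2_eq_square by (rule mult_divide_mult_cancel_right[OF b])
  have "((w * s) * (1+2 * 1 * s+1 ^ 2) - (w * (1+1 * s)) * (2 * s+2 * 1)) / (1+2 * 1 * s+1 ^ 2) ^ 2 = -(w)/(2 * (1+s))"
    by (subst e2, subst e1, rule e3)
  with d show ?thesis by simp
qed

theorem theorem1:
  fixes q :: nat and w t :: "nat \<Rightarrow> real"
  assumes "q \<ge> 1"
    and "gauss_legendre_rule q w t"
  shows "rho_ref q w t 0 = 1 \<and> rho_ref q w t 1 = 1/2
    \<and> (\<exists>D. (rho_ref q w t has_real_derivative D) (at 1) \<and> D < 0)
    \<and> (\<forall>\<mu>\<in>{-1..1}. rho_ref q w t \<mu> \<ge> 1/2)"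
proof -
  define s where "s k = sin (pi * t k / 2)" for k
  have G: "\<forall>k<q. 0 < w k \<and> -1 < t k \<and> t k < 1" "(\<Sum>k<q. w k) = 2"
    using assms(2) unfolding gauss_legendre_rule_def by auto
  have sb: "-1 < s k \<and> s k < 1" if "k < q" for k
    using s_bounds[of "t k"] G(1) that unfolding s_def by auto
  have R: "rho_ref q w t = (\<lambda>\<mu>. 1/2 * (\<Sum>k<q. w k * (1 + \<mu> * s k) /
        (1 + 2 * \<mu> * s k + \<mu>^2)))"
    unfolding rho_ref_def s_def by auto
  have P1: "rho_ref q w t 0 = 1" using G(2) by (simp add: R)
  have "(\<Sum>k<q. w k * (1 + 1 * s k) / (1 + 2 * 1 * s k + 1^2)) = (\<Sum>k<q. w k / 2)"
  proof (rule sum.cong)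
    fix k assume "k \<in> {..<q}"
    with sb[of k] have "1 + s k > 0" by auto
    then show "w k * (1 + 1 * s k) / (1 + 2 * 1 * s k + 1^2) = w k / 2"
      by (simp add: field_simps)
  qed simp
  then have P2: "rho_ref q w t 1 = 1/2" using G(2)
    by (simp add: R sum_divide_distrib[symmetric])
  have dk: "((\<lambda>\<mu>. w k * (1 + \<mu> * s k) / (1 + 2 * \<mu> * s k + \<mu>^2))
      has_real_derivative (-(w k)/(2*(1+s k)))) (at 1)" if "k < q" for k
  proof -
    from sb[OF that] have p: "1 + s k > 0" by auto
    show ?thesis using X[OF p] by simp
  qed
  have D: "(rho_ref q w t has_real_derivative 1/2 * (\<Sum>k<q. -(w k)/(2*(1+s k)))) (at 1)"
    unfolding R
    by (intro DERIV_cmult DERIV_sum dk) auto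
  have "(\<Sum>k<q. -(w k)/(2*(1+s k))) < 0"
  proof -
    have "(\<Sum>k<q. w k/(2*(1+s k))) > 0"
    proof (rule sum_pos)
      show "finite {..<q}" by simp
      have "0 \<in> {..<q}" using assms(1) by simp
      then show "{..<q} \<noteq> {}" by blast
      fix k assume "k \<in> {..<q}"
      with sb[of k] G(1) show "0 < w k / (2 * (1 + s k))" by auto
    qed
    then show ?thesis by (simp add: sum_negf)
  qed
  then have P3: "\<exists>D. (rho_ref q w t has_real_derivative D) (at 1) \<and> D < 0"
    using D by (intro exI[of _ "1/2 * (\<Sum>k<q. -(w k)/(2*(1+s k)))"]) auto
  have P4: "rho_ref q w t \<mu> \<ge> 1/2" if "\<mu> \<in> {-1..1}" for \<mu>
  proof -
    have "(\<Sum>k<q. w k / 2) \<le> (\<Sum>k<q. w k * (1 + \<mu> * s k) / (1 + 2 * \<mu> * s k + \<mu>^2))"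
    proof (rule sum_mono)
      fix k assume "k \<in> {..<q}"
      with sb[of k] G(1) have sk: "-1 < s k" "s k < 1" and wk: "w k > 0" by auto
      have den: "1 + 2 * \<mu> * s k + \<mu>^2 > 0"
      proof -
        have "1 + 2 * \<mu> * s k + \<mu>^2 = (\<mu> + s k)^2 + (1 - s k^2)"
          by (simp add: power2_eq_square algebra_simps)
        moreover have "s k^2 < 1" using sk by (simp add: abs_square_less_1)
        moreover have "(\<mu> + s k)^2 \<ge> 0" by simp
        ultimately show ?thesis by linarith
      qed
      have "\<bar>\<mu>\<bar> \<le> 1" using that by auto
      then have "\<mu>^2 \<le> 1" by (simp add: abs_square_le_1)
      then have "1 - \<mu>^2 \<ge> 0" by simp
      have "w k * (1 + \<mu> * s k) / (1 + 2 * \<mu> * s k + \<mu>^2) - w k / 2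
          = w k * (1 - \<mu>^2) / (2 * (1 + 2 * \<mu> * s k + \<mu>^2))"
        by (rule T[OF den])
      also have "\<dots> \<ge> 0" using den wk \<open>1 - \<mu>^2 \<ge> 0\<close> by simp
      finally show "w k / 2 \<le> w k * (1 + \<mu> * s k) / (1 + 2 * \<mu> * s k + \<mu>^2)" by simp
    qed
    moreover have "(\<Sum>k<q. w k / 2) = 1" using G(2) by (simp add: sum_divide_distrib[symmetric])
    ultimately show ?thesis by (simp add: R)
  qed
  show ?thesis using P1 P2 P3 P4 by blast
qed

end
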